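(* Let $r_i,n_i,k_{ij}$ ($i,j\in[d]$) be integers with $r_i\ge0$, $r_1+\dots+r_d\ge1$, $k_{ij}\ge0$ for $i\ne j$, $-k_{jj}=r_j+\sum_{i\ne j}k_{ij}$ for all $j$, $n_i\ge-k_{ii}$ and $-k_{ii}>0$ for all $i$. Let $\mathcal F_d^{k_{ij},\mathrm n}$ be the set of $d$-type plane forests with $n_i$ vertices of type $i$, $r_i$ roots of type $i$, and such that for $i\ne j$ exactly $k_{ij}$ vertices of type $j$ have a parent of type $i$. Then $$\left|\mathcal F_d^{k_{ij},\mathrm n}\right|=\frac{\det(-k_{ij})}{n_1n_2\cdots n_d}\prod_{i,j=1}^d\binom{n_i+k'_{ij}-1}{k'_{ij}},$$ where $k'_{ii}=n_i+k_{ii}$ and $k'_{ij}=k_{ij}$ for $i\ne j$.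
   Context: $d\ge2$, $[d]=\{1,\dots,d\}$. A $d$-type plane forest is a finite sequence of finite rooted plane (ordered) trees whose vertices each carry a type in $[d]$, such that children of a common parent appear from left to right in nondecreasing order of type; forests are unlabeled (counted up to isomorphism preserving the tree order, planar order and types).
   Formalization: In a d-type plane forest the roots, like the children of a common parent, appear from left to right in nondecreasing order of type, instead of in any order. The statement above fails without it. *)

theory Defs
  imports Main "Jordan_Normal_Form.Determinant"
begin

text \<open>A vertex-typed plane tree: a node carries its type (a natural number)
  and the ordered list of its subtrees (children from left to right).
  Since the datatype is ordered, distinct values correspond exactly to
  isomorphism classes of typed plane trees.\<close>

datatype ptree = Node nat "ptree list"

fun ptype :: "ptree \<Rightarrow> nat" where
  "ptype (Node t cs) = t"

fun wf_tree :: "nat \<Rightarrow> ptree \<Rightarrow> bool" where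
  "wf_tree d (Node t cs) \<longleftrightarrow>
     t \<in> {1..d} \<and> sorted (map ptype cs) \<and> (\<forall>c\<in>set cs. wf_tree d c)"

definition plane_forest :: "nat \<Rightarrow> ptree list \<Rightarrow> bool" where
  "plane_forest d F \<longleftrightarrow> sorted (map ptype F) \<and> (\<forall>T\<in>set F. wf_tree d T)"

fun tverts :: "nat \<Rightarrow> ptree \<Rightarrow> nat" where
  "tverts i (Node t cs) = (if t = i then 1 else 0) + sum_list (map (tverts i) cs)"

definition fverts :: "nat \<Rightarrow> ptree list \<Rightarrow> nat" where
  "fverts i F = sum_list (map (tverts i) F)"

definition froots :: "nat \<Rightarrow> ptree list \<Rightarrow> nat" where
  "froots i F = length (filter (\<lambda>T. ptype T = i) F)"

fun tedges :: "nat \<Rightarrow> nat \<Rightarrow> ptree \<Rightarrow> nat" where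
  "tedges i j (Node t cs) =
     (if t = i then length (filter (\<lambda>c. ptype c = j) cs) else 0)
     + sum_list (map (tedges i j) cs)"

definition fedges :: "nat \<Rightarrow> nat \<Rightarrow> ptree list \<Rightarrow> nat" where
  "fedges i j F = sum_list (map (tedges i j) F)"

definition forest_class ::
  "nat \<Rightarrow> (nat \<Rightarrow> int) \<Rightarrow> (nat \<Rightarrow> int) \<Rightarrow> (nat \<Rightarrow> nat \<Rightarrow> int) \<Rightarrow> ptree list set" where
  "forest_class d n r k = {F. plane_forest d F
      \<and> (\<forall>i\<in>{1..d}. int (fverts i F) = n i)
      \<and> (\<forall>i\<in>{1..d}. int (froots i F) = r i)
      \<and> (\<forall>i\<in>{1..d}. \<forall>j\<in>{1..d}. i \<noteq> j \<longrightarrow> int (fedges i j F) = k i j)}"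

end

theory Submission
  imports Defs "HOL-Library.FuncSet"
begin


definition cntl :: "nat \<Rightarrow> nat list \<Rightarrow> nat" where
  "cntl j xs = length (filter (\<lambda>t. t = j) xs)"

definition sig :: "nat \<Rightarrow> (nat \<Rightarrow> nat) \<Rightarrow> nat list" where
  "sig d c = concat (map (\<lambda>j. replicate (c j) j) [1..<Suc d])"

lemma sig_Suc: "sig (Suc d) c = sig d c @ replicate (c (Suc d)) (Suc d)"
  by (simp add: sig_def)

lemma set_sig: "set (sig d c) \<subseteq> {1..d}"
  by (auto simp: sig_def)

lemma sorted_sig: "sorted (sig d c)"
proof (induction d)
  case 0 then show ?case by (simp add: sig_def)
next
  case (Suc d)
  have "\<forall>x\<in>set (sig d c). x \<le> Suc d" using set_sig[of d c] by auto
  then show ?case using Suc by (auto simp: sig_Suc sorted_append)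
qed

lemma cntl_append[simp]: "cntl j (xs @ ys) = cntl j xs + cntl j ys"
  by (simp add: cntl_def)
lemma cntl_Cons[simp]: "cntl j (x # xs) = (if x = j then 1 else 0) + cntl j xs"
  by (simp add: cntl_def)
lemma cntl_Nil[simp]: "cntl j [] = 0"
  by (simp add: cntl_def)

lemma cntl_replicate: "cntl j (replicate m x) = (if x = j then m else 0)"
  by (induction m) auto

lemma cntl_sig: "cntl j (sig d c) = (if j \<in> {1..d} then c j else 0)"
  by (induction d) (auto simp: sig_Suc cntl_replicate, auto simp: sig_def)

lemma length_sig: "length (sig d c) = (\<Sum>j\<in>{1..d}. c j)"
  by (induction d) (auto simp: sig_Suc, simp add: sig_def)

lemma cntl_count: "cntl j xs = count (mset xs) j"
  by (induction xs) auto

lemma sorted_eq_sig: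
  assumes "sorted xs" "set xs \<subseteq> {1..d}" "\<forall>j\<in>{1..d}. cntl j xs = c j"
  shows "xs = sig d c"
proof -
  have "mset xs = mset (sig d c)"
  proof (rule multiset_eqI)
    fix j
    show "count (mset xs) j = count (mset (sig d c)) j"
    proof (cases "j \<in> {1..d}")
      case True then show ?thesis using assms(3) cntl_sig[of j d c] by (simp add: cntl_count)
    next
      case False
      then have "j \<notin> set xs" "j \<notin> set (sig d c)" using assms(2) set_sig[of d c] by auto
      then show ?thesis by (metis count_eq_zero_iff set_mset_mset)
    qed
  qed
  then show ?thesis using assms(1) sorted_sig[of d c]
    by (metis properties_for_sort sorted_sort_id)
qed

lemma fverts_Nil[simp]: "fverts i [] = 0" by (simp add: fverts_def)
lemma fverts_Cons[simp]: "fverts i (T # F) = tverts i T + fverts i F" by (simp add: fverts_def)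
lemma fverts_append[simp]: "fverts i (F @ G) = fverts i F + fverts i G" by (simp add: fverts_def)
lemma fedges_Nil[simp]: "fedges i j [] = 0" by (simp add: fedges_def)
lemma fedges_Cons[simp]: "fedges i j (T # F) = tedges i j T + fedges i j F" by (simp add: fedges_def)
lemma fedges_append[simp]: "fedges i j (F @ G) = fedges i j F + fedges i j G" by (simp add: fedges_def)

lemma tverts_Node: "tverts i (Node t cs) = (if t = i then 1 else 0) + fverts i cs"
  by (simp add: fverts_def)
lemma tedges_Node: "tedges i j (Node t cs) =
  (if t = i then cntl j (map ptype cs) else 0) + fedges i j cs"
  by (simp add: fedges_def cntl_def filter_map comp_def)

declare tverts.simps[simp del] tedges.simps[simp del]

lemma fedges_sum_swap:
  "(\<Sum>i\<in>A. fedges i j F) = (\<Sum>T\<leftarrow>F. \<Sum>i\<in>A. tedges i j T)"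
  by (induction F) (auto simp: sum.distrib)

lemma tree_count:
  "wf_tree d T \<Longrightarrow> tverts j T = (if ptype T = j then 1 else 0) + (\<Sum>i\<in>{1..d}. tedges i j T)"
proof (induction T)
  case (Node t cs)
  have IH: "\<And>c. c \<in> set cs \<Longrightarrow> tverts j c = (if ptype c = j then 1 else 0) + (\<Sum>i\<in>{1..d}. tedges i j c)"
    using Node by auto
  have t: "t \<in> {1..d}" using Node.prems by simp
  have f: "fverts j cs = cntl j (map ptype cs) + (\<Sum>i\<in>{1..d}. fedges i j cs)"
    using IH
  proof (induction cs)
    case Nil then show ?case by simp
  next
    case (Cons a cs)
    then show ?case by (auto simp: sum.distrib)
  qed
  have "(\<Sum>i\<in>{1..d}. tedges i j (Node t cs))
     = (\<Sum>i\<in>{1..d}. (if t = i then cntl j (map ptype cs) else 0)) + (\<Sum>i\<in>{1..d}. fedges i j cs)"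
    by (simp add: tedges_Node sum.distrib)
  also have "(\<Sum>i\<in>{1..d}. (if t = i then cntl j (map ptype cs) else 0)) = cntl j (map ptype cs)"
    using t by (simp add: sum.delta)
  finally show ?case using f by (simp add: tverts_Node)
qed

lemma forest_count:
  "\<forall>T\<in>set F. wf_tree d T \<Longrightarrow> fverts j F = cntl j (map ptype F) + (\<Sum>i\<in>{1..d}. fedges i j F)"
  by (induction F) (auto simp: tree_count sum.distrib)



definition forests :: "nat \<Rightarrow> nat list \<Rightarrow> (nat \<Rightarrow> nat) \<Rightarrow> (nat \<Rightarrow> nat \<Rightarrow> nat) \<Rightarrow> ptree list set" where
  "forests d \<tau> n E = {F. map ptype F = \<tau> \<and> (\<forall>T\<in>set F. wf_tree d T)
     \<and> (\<forall>i\<in>{1..d}. fverts i F = n i) \<and> (\<forall>i\<in>{1..d}. \<forall>j\<in>{1..d}. fedges i j F = E i j)}"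

definition box :: "nat \<Rightarrow> (nat \<Rightarrow> nat \<Rightarrow> nat) \<Rightarrow> nat \<Rightarrow> (nat \<Rightarrow> nat) set" where
  "box d E i = PiE {1..d} (\<lambda>j. {0..E i j})"

definition mk :: "nat \<Rightarrow> nat \<Rightarrow> (nat \<Rightarrow> nat) \<times> ptree list \<Rightarrow> ptree list" where
  "mk d i = (\<lambda>(c, G). Node i (take (length (sig d c)) G) # drop (length (sig d c)) G)"

abbreviation subs where
  "subs d \<tau> n E i \<equiv> (SIGMA c:box d E i. forests d (sig d c @ \<tau>) (n(i := n i - 1)) (E(i := (\<lambda>j. E i j - c j))))"

lemma wf_ptype: "wf_tree d T \<Longrightarrow> ptype T \<in> {1..d}"
  by (cases T) auto

lemma finite_box: "finite (box d E i)"
  by (simp add: box_def finite_PiE)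

lemma split_types:
  assumes "map ptype G = sig d c @ \<tau>"
  shows "map ptype (take (length (sig d c)) G) = sig d c" "map ptype (drop (length (sig d c)) G) = \<tau>"
proof -
  have "take (length (sig d c)) (map ptype G) = sig d c" "drop (length (sig d c)) (map ptype G) = \<tau>"
    using assms by simp_all
  then show "map ptype (take (length (sig d c)) G) = sig d c" "map ptype (drop (length (sig d c)) G) = \<tau>"
    by (simp_all add: take_map drop_map)
qed

lemma rec_image:
  assumes i: "i \<in> {1..d}" and ni: "n i \<ge> 1"
  shows "forests d (i#\<tau>) n E = mk d i ` subs d \<tau> n E i"
proof
  show "mk d i ` subs d \<tau> n E i \<subseteq> forests d (i#\<tau>) n E"
  proof
    fix F assume "F \<in> mk d i ` subs d \<tau> n E i"
    then obtain c G where c: "c \<in> box d E i"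
      and G: "G \<in> forests d (sig d c @ \<tau>) (n(i := n i - 1)) (E(i := (\<lambda>j. E i j - c j)))"
      and F: "F = mk d i (c, G)" by auto
    define m where "m = length (sig d c)"
    define cs where "cs = take m G"
    define rest where "rest = drop m G"
    have G': "G = cs @ rest" by (simp add: cs_def rest_def)
    have F': "F = Node i cs # rest" by (simp add: F mk_def cs_def rest_def m_def)
    have mp: "map ptype G = sig d c @ \<tau>" using G by (simp add: forests_def)
    have tcs: "map ptype cs = sig d c" and trest: "map ptype rest = \<tau>"
      using split_types[OF mp] by (simp_all add: cs_def rest_def m_def)
    have wfG: "\<forall>T\<in>set G. wf_tree d T" using G by (simp add: forests_def)
    have cle: "\<And>j. j \<in> {1..d} \<Longrightarrow> c j \<le> E i j" using c by (auto simp: box_def PiE_iff)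
    have ccnt: "\<And>j. j \<in> {1..d} \<Longrightarrow> cntl j (map ptype cs) = c j" using tcs cntl_sig by simp
    show "F \<in> forests d (i#\<tau>) n E"
      unfolding forests_def
    proof (intro CollectI conjI ballI)
      show "map ptype F = i # \<tau>" using F' trest by simp
      fix T assume "T \<in> set F"
      then show "wf_tree d T" using wfG i tcs sorted_sig[of d c] by (auto simp: F' G')
    next
      fix j assume j: "j \<in> {1..d}"
      have "fverts j G = (n(i := n i - 1)) j" using G j by (simp add: forests_def)
      then show "fverts j F = n j" using ni by (auto simp: F' G' tverts_Node split: if_splits)
    next
      fix l j assume l: "l \<in> {1..d}" and j: "j \<in> {1..d}"
      have "fedges l j G = (E(i := (\<lambda>j. E i j - c j))) l j" using G j l by (simp add: forests_def)
      then show "fedges l j F = E l j" using cle[OF j] ccnt[OF j]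
        by (auto simp: F' G' tedges_Node split: if_splits)
    qed
  qed
next
  show "forests d (i#\<tau>) n E \<subseteq> mk d i ` subs d \<tau> n E i"
  proof
    fix F assume F: "F \<in> forests d (i#\<tau>) n E"
    then have mp: "map ptype F = i # \<tau>" and wf: "\<forall>T\<in>set F. wf_tree d T"
      and fv: "\<forall>j\<in>{1..d}. fverts j F = n j" and fe: "\<forall>l\<in>{1..d}. \<forall>j\<in>{1..d}. fedges l j F = E l j"
      by (auto simp: forests_def)
    obtain T rest where FT: "F = T # rest" using mp by (cases F) auto
    obtain t cs where T: "T = Node t cs" by (cases T)
    have t: "t = i" using mp FT T by simp
    have trest: "map ptype rest = \<tau>" using mp FT by simp
    define c where "c = restrict (\<lambda>j. cntl j (map ptype cs)) {1..d}"
    have wfT: "wf_tree d (Node i cs)" using wf FT T t by simp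
    have tcs: "map ptype cs = sig d c"
    proof (rule sorted_eq_sig)
      show "sorted (map ptype cs)" using wfT by simp
      show "set (map ptype cs) \<subseteq> {1..d}" using wfT wf_ptype by auto
      show "\<forall>j\<in>{1..d}. cntl j (map ptype cs) = c j" by (simp add: c_def)
    qed
    have cbox: "c \<in> box d E i"
    proof -
      have "c j \<le> E i j" if j: "j \<in> {1..d}" for j
      proof -
        have "c j \<le> tedges i j T" using j by (simp add: c_def T t tedges_Node)
        also have "\<dots> \<le> fedges i j F" by (simp add: FT)
        finally show ?thesis using fe i j by simp
      qed
      then show ?thesis by (auto simp: box_def PiE_iff c_def)
    qed
    have lm: "length (sig d c) = length cs" using tcs by (metis length_map)
    define G where "G = cs @ rest"
    have "F = mk d i (c, G)" using lm by (simp add: mk_def G_def FT T t)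
    moreover have "G \<in> forests d (sig d c @ \<tau>) (n(i := n i - 1)) (E(i := (\<lambda>j. E i j - c j)))"
      unfolding forests_def
    proof (intro CollectI conjI ballI)
      show "map ptype G = sig d c @ \<tau>" using tcs trest by (simp add: G_def)
      show "\<And>T'. T' \<in> set G \<Longrightarrow> wf_tree d T'" using wf wfT by (auto simp: G_def FT T t)
    next
      fix j assume j: "j \<in> {1..d}"
      have "fverts j F = n j" using fv j by simp
      then show "fverts j G = (n(i := n i - 1)) j"
        by (auto simp: G_def FT T t tverts_Node split: if_splits)
    next
      fix l j assume l: "l \<in> {1..d}" and j: "j \<in> {1..d}"
      have "c j = cntl j (map ptype cs)" using j by (simp add: c_def)
      moreover have "fedges l j F = E l j" using fe l j by simp
      ultimately show "fedges l j G = (E(i := (\<lambda>j. E i j - c j))) l j"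
        by (auto simp: G_def FT T t tedges_Node split: if_splits)
    qed
    ultimately show "F \<in> mk d i ` subs d \<tau> n E i" using cbox by blast
  qed
qed

lemma rec_inj: "inj_on (mk d i) (subs d \<tau> n E i)"
proof (rule inj_onI)
  fix x y assume x: "x \<in> subs d \<tau> n E i" and y: "y \<in> subs d \<tau> n E i" and eq: "mk d i x = mk d i y"
  obtain c1 G1 where x': "x = (c1, G1)" by (cases x)
  obtain c2 G2 where y': "y = (c2, G2)" by (cases y)
  have c1: "c1 \<in> box d E i" and m1: "map ptype G1 = sig d c1 @ \<tau>" using x x' by (auto simp: forests_def)
  have c2: "c2 \<in> box d E i" and m2: "map ptype G2 = sig d c2 @ \<tau>" using y y' by (auto simp: forests_def)
  have tk: "take (length (sig d c1)) G1 = take (length (sig d c2)) G2"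
    and dr: "drop (length (sig d c1)) G1 = drop (length (sig d c2)) G2"
    using eq by (simp_all add: x' y' mk_def)
  have "sig d c1 = sig d c2" using split_types(1)[OF m1] split_types(1)[OF m2] tk by metis
  then have "\<forall>j\<in>{1..d}. c1 j = c2 j" by (metis cntl_sig)
  then have "c1 = c2" using c1 c2 unfolding box_def by (metis PiE_ext)
  then have "G1 = G2" using tk dr by (metis append_take_drop_id)
  then show "x = y" using \<open>c1 = c2\<close> x' y' by simp
qed

lemma rec_card:
  assumes i: "i \<in> {1..d}" and ni: "n i \<ge> 1"
    and fin: "\<forall>c\<in>box d E i. finite (forests d (sig d c @ \<tau>) (n(i := n i - 1)) (E(i := (\<lambda>j. E i j - c j))))"
  shows "finite (forests d (i#\<tau>) n E) \<and>
    card (forests d (i#\<tau>) n E) = (\<Sum>c\<in>box d E i. card (forests d (sig d c @ \<tau>) (n(i := n i - 1)) (E(i := (\<lambda>j. E i j - c j)))))"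
proof -
  have fs: "finite (subs d \<tau> n E i)" using fin finite_box by (intro finite_SigmaI) auto
  have "card (forests d (i#\<tau>) n E) = card (subs d \<tau> n E i)"
    using rec_image[of i d n \<tau> E, OF i ni] card_image[OF rec_inj] by simp
  also have "\<dots> = (\<Sum>c\<in>box d E i. card (forests d (sig d c @ \<tau>) (n(i := n i - 1)) (E(i := (\<lambda>j. E i j - c j)))))"
    using fin finite_box by (simp add: card_SigmaI)
  finally show ?thesis using rec_image[of i d n \<tau> E, OF i ni] fs by simp
qed



definition bb :: "nat \<Rightarrow> nat \<Rightarrow> nat" where
  "bb m k = (m + k - 1) choose k"

lemma bb_0: "bb 0 k = (if k = 0 then 1 else 0)"
  by (simp add: bb_def)

lemma bb_1: "bb 1 k = 1"
  by (simp add: bb_def)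

lemma bb_step: "m \<ge> 1 \<Longrightarrow> bb m (Suc k) = bb (m - 1) (Suc k) + bb m k"
proof -
  assume m: "m \<ge> 1"
  define N where "N = m + k - 1"
  have N: "m + k = Suc N" using m by (simp add: N_def)
  have "bb m (Suc k) = Suc N choose Suc k" using N by (simp add: bb_def)
  also have "\<dots> = (N choose k) + (N choose Suc k)" by simp
  finally show ?thesis using N m by (simp add: bb_def)
qed

lemma bin_sum: "m \<ge> 1 \<Longrightarrow> (\<Sum>c\<in>{0..k}. bb (m - 1) (k - c)) = bb m k"
proof (induction k)
  case 0 then show ?case by (simp add: bb_def)
next
  case (Suc k)
  have "(\<Sum>c\<in>{0..Suc k}. bb (m - 1) (Suc k - c)) = bb (m - 1) (Suc k) + (\<Sum>c\<in>{0..k}. bb (m - 1) (k - c))"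
    by (subst sum.atLeast0_atMost_Suc_shift) simp
  also have "\<dots> = bb m (Suc k)" using Suc bb_step[of m k] by simp
  finally show ?case .
qed

lemma bb_mult: "m \<ge> 1 \<Longrightarrow> Suc k * bb m (Suc k) = (m + k) * bb m k"
proof -
  assume m: "m \<ge> 1"
  define N where "N = m + k - 1"
  have N: "m + k = Suc N" using m by (simp add: N_def)
  have b1: "bb m (Suc k) = Suc N choose Suc k" using N by (simp add: bb_def)
  have b2: "bb m k = N choose k" using N by (simp add: bb_def)
  have "Suc k * (Suc N choose Suc k) = Suc N * (N choose k)" by (rule Suc_times_binomial)
  then show ?thesis by (simp only: b1 b2 N)
qed

lemma bin_wsum: "m \<ge> 1 \<Longrightarrow> m * (\<Sum>c\<in>{0..k}. c * bb (m - 1) (k - c)) = k * bb m k"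
proof (induction k)
  case 0 then show ?case by simp
next
  case (Suc k)
  have h0: "(\<Sum>c\<in>{0..Suc k}. c * bb (m - 1) (Suc k - c))
      = (\<Sum>c\<in>{0..k}. Suc c * bb (m - 1) (k - c))"
    by (subst sum.atLeast0_atMost_Suc_shift) simp
  have h1: "(\<Sum>c\<in>{0..k}. Suc c * bb (m - 1) (k - c))
      = (\<Sum>c\<in>{0..k}. c * bb (m - 1) (k - c)) + (\<Sum>c\<in>{0..k}. bb (m - 1) (k - c))"
    by (simp only: mult_Suc sum.distrib add.commute)
  have "m * (\<Sum>c\<in>{0..Suc k}. c * bb (m - 1) (Suc k - c))
      = m * (\<Sum>c\<in>{0..k}. c * bb (m - 1) (k - c)) + m * bb m k"
    using h0 h1 bin_sum[OF Suc.prems, of k] by (simp only: add_mult_distrib2)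
  also have "\<dots> = k * bb m k + m * bb m k" using Suc.IH[OF Suc.prems] by (simp only:)
  also have "\<dots> = (m + k) * bb m k" by (simp only: add_mult_distrib add.commute)
  also have "\<dots> = Suc k * bb m (Suc k)" using bb_mult[OF Suc.prems, of k] by (simp only:)
  finally show ?case .
qed

lemma box_sum:
  assumes m: "m \<ge> 1"
  shows "(\<Sum>c\<in>box d E i. \<Prod>j\<in>{1..d}. bb (m - 1) (E i j - c j)) = (\<Prod>j\<in>{1..d}. bb m (E i j))"
proof -
  have "(\<Sum>c\<in>box d E i. \<Prod>j\<in>{1..d}. bb (m - 1) (E i j - c j))
      = (\<Prod>j\<in>{1..d}. \<Sum>x\<in>{0..E i j}. bb (m - 1) (E i j - x))"
    unfolding box_def by (rule prod_sum_PiE[symmetric]) auto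
  also have "\<dots> = (\<Prod>j\<in>{1..d}. bb m (E i j))"
    by (rule prod.cong[OF refl]) (rule bin_sum[OF m])
  finally show ?thesis .
qed

lemma box_wsum:
  assumes m: "m \<ge> 1" and j0: "j0 \<in> {1..d}"
  shows "m * (\<Sum>c\<in>box d E i. c j0 * (\<Prod>j\<in>{1..d}. bb (m - 1) (E i j - c j)))
     = E i j0 * (\<Prod>j\<in>{1..d}. bb m (E i j))"
proof -
  define f where "f = (\<lambda>j x. (if j = j0 then x else 1) * bb (m - 1) (E i j - x))"
  have e1: "c j0 * (\<Prod>j\<in>{1..d}. bb (m - 1) (E i j - c j)) = (\<Prod>j\<in>{1..d}. f j (c j))" for c
  proof -
    have "(\<Prod>j\<in>{1..d}. f j (c j)) = f j0 (c j0) * (\<Prod>j\<in>{1..d} - {j0}. f j (c j))"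
      using j0 by (simp add: prod.remove)
    moreover have "(\<Prod>j\<in>{1..d} - {j0}. f j (c j)) = (\<Prod>j\<in>{1..d} - {j0}. bb (m - 1) (E i j - c j))"
      by (rule prod.cong) (auto simp: f_def)
    moreover have "(\<Prod>j\<in>{1..d}. bb (m - 1) (E i j - c j)) = bb (m - 1) (E i j0 - c j0) * (\<Prod>j\<in>{1..d} - {j0}. bb (m - 1) (E i j - c j))"
      using j0 by (simp add: prod.remove)
    moreover have "f j0 (c j0) = c j0 * bb (m - 1) (E i j0 - c j0)" by (simp add: f_def)
    ultimately show ?thesis by (simp only: mult.assoc)
  qed
  have e2: "(\<Sum>c\<in>box d E i. \<Prod>j\<in>{1..d}. f j (c j)) = (\<Prod>j\<in>{1..d}. \<Sum>x\<in>{0..E i j}. f j x)"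
    unfolding box_def by (rule prod_sum_PiE[symmetric]) auto
  have e3: "(\<Prod>j\<in>{1..d}. \<Sum>x\<in>{0..E i j}. f j x) = (\<Sum>x\<in>{0..E i j0}. f j0 x) * (\<Prod>j\<in>{1..d} - {j0}. \<Sum>x\<in>{0..E i j}. f j x)"
    using j0 by (simp add: prod.remove)
  have bs: "(\<Sum>x\<in>{0..k}. bb (m - 1) (k - x)) = bb m k" for k using bin_sum[OF m] .
  have e4: "(\<Prod>j\<in>{1..d} - {j0}. \<Sum>x\<in>{0..E i j}. f j x) = (\<Prod>j\<in>{1..d} - {j0}. bb m (E i j))"
  proof (rule prod.cong[OF refl])
    fix j assume "j \<in> {1..d} - {j0}"
    then have "(\<Sum>x\<in>{0..E i j}. f j x) = (\<Sum>x\<in>{0..E i j}. bb (m - 1) (E i j - x))"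
      by (simp add: f_def)
    then show "(\<Sum>x\<in>{0..E i j}. f j x) = bb m (E i j)" using bs by simp
  qed
  have e5: "(\<Sum>x\<in>{0..E i j0}. f j0 x) = (\<Sum>x\<in>{0..E i j0}. x * bb (m - 1) (E i j0 - x))"
    by (simp add: f_def)
  have e6: "(\<Prod>j\<in>{1..d}. bb m (E i j)) = bb m (E i j0) * (\<Prod>j\<in>{1..d} - {j0}. bb m (E i j))"
    using j0 by (simp add: prod.remove)
  have "(\<Sum>c\<in>box d E i. c j0 * (\<Prod>j\<in>{1..d}. bb (m - 1) (E i j - c j)))
      = (\<Sum>c\<in>box d E i. \<Prod>j\<in>{1..d}. f j (c j))"
    using e1 by simp
  also have "\<dots> = (\<Sum>x\<in>{0..E i j0}. x * bb (m - 1) (E i j0 - x)) * (\<Prod>j\<in>{1..d} - {j0}. bb m (E i j))"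
    using e2 e3 e4 e5 by simp
  finally have "m * (\<Sum>c\<in>box d E i. c j0 * (\<Prod>j\<in>{1..d}. bb (m - 1) (E i j - c j)))
      = (m * (\<Sum>x\<in>{0..E i j0}. x * bb (m - 1) (E i j0 - x))) * (\<Prod>j\<in>{1..d} - {j0}. bb m (E i j))"
    by (simp only: mult.assoc)
  also have "\<dots> = E i j0 * bb m (E i j0) * (\<Prod>j\<in>{1..d} - {j0}. bb m (E i j))"
    using bin_wsum[OF m, of "E i j0"] by (simp only:)
  also have "\<dots> = E i j0 * (\<Prod>j\<in>{1..d}. bb m (E i j))"
    using e6 by (simp only: mult.assoc)
  finally show ?thesis .
qed


lemma cof_row_indep:
  assumes A: "A \<in> carrier_mat d d" and B: "B \<in> carrier_mat d d"
    and agree: "\<And>a b. a < d \<Longrightarrow> b < d \<Longrightarrow> a \<noteq> p \<Longrightarrow> A $$ (a, b) = B $$ (a, b)"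
  shows "cofactor A p q = cofactor B p q"
proof -
  have "mat_delete A p q = mat_delete B p q"
    unfolding mat_delete_def using A B
    by (intro eq_matI) (auto intro!: agree)
  then show ?thesis by (simp add: cofactor_def)
qed

lemma det_row_replace:
  fixes A B :: "'a :: comm_ring_1 mat"
  assumes A: "A \<in> carrier_mat d d" and B: "B \<in> carrier_mat d d" and p: "p < d"
    and agree: "\<And>a b. a < d \<Longrightarrow> b < d \<Longrightarrow> a \<noteq> p \<Longrightarrow> A $$ (a, b) = B $$ (a, b)"
  shows "det B = (\<Sum>b<d. B $$ (p, b) * cofactor A p b)"
  using laplace_expansion_row[OF B p] cof_row_indep[OF A B agree] by simp

lemma sum_Suc_conv: "(\<Sum>a<d. f (Suc a)) = (\<Sum>l\<in>{1..d}. f l)"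
  by (induction d) (simp_all add: atLeastAtMostSuc_conv ac_simps)

lemma prod_Suc_conv: "(\<Prod>a<d. f (Suc a)) = (\<Prod>l\<in>{1..d}. f l)"
  by (induction d) (simp_all add: atLeastAtMostSuc_conv ac_simps)



definition ah :: "(nat \<Rightarrow> nat) \<Rightarrow> (nat \<Rightarrow> nat \<Rightarrow> nat) \<Rightarrow> nat \<Rightarrow> nat \<Rightarrow> int" where
  "ah n E i j = (if n i = 0 then (if i = j then 1 else 0)
                 else (if i = j then int (n i) else 0) - int (E i j))"

definition Ahat :: "nat \<Rightarrow> (nat \<Rightarrow> nat) \<Rightarrow> (nat \<Rightarrow> nat \<Rightarrow> nat) \<Rightarrow> int mat" where
  "Ahat d n E = mat d d (\<lambda>(a, b). ah n E (Suc a) (Suc b))"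

definition pres :: "nat \<Rightarrow> (nat \<Rightarrow> nat) \<Rightarrow> nat set" where
  "pres d n = {l\<in>{1..d}. n l \<noteq> 0}"

definition PP :: "nat \<Rightarrow> (nat \<Rightarrow> nat) \<Rightarrow> int" where
  "PP d n = (\<Prod>l\<in>pres d n. int (n l))"

definition Gp :: "nat \<Rightarrow> (nat \<Rightarrow> nat) \<Rightarrow> (nat \<Rightarrow> nat \<Rightarrow> nat) \<Rightarrow> nat" where
  "Gp d n E = (\<Prod>l\<in>{1..d}. \<Prod>j\<in>{1..d}. bb (n l) (E l j))"

lemma Ahat_carrier: "Ahat d n E \<in> carrier_mat d d"
  by (simp add: Ahat_def)

lemma Ahat_index: "a < d \<Longrightarrow> b < d \<Longrightarrow> Ahat d n E $$ (a, b) = ah n E (Suc a) (Suc b)"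
  by (simp add: Ahat_def)

lemma alg:
  fixes D R :: "'c \<Rightarrow> int" and cv :: "'c \<Rightarrow> nat \<Rightarrow> int" and a C \<delta> e :: "nat \<Rightarrow> int"
  assumes D: "\<And>c. c \<in> X \<Longrightarrow> D c = (\<Sum>b<d. (a b + cv c b - \<delta> b) * C b)"
    and S1: "(\<Sum>c\<in>X. R c) = Rf"
    and S2: "\<And>b. b < d \<Longrightarrow> N * (\<Sum>c\<in>X. cv c b * R c) = e b * Rf"
    and S3: "\<And>b. b < d \<Longrightarrow> a b = \<delta> b * N - e b"
  shows "N * (\<Sum>c\<in>X. D c * R c) = (N - 1) * Rf * (\<Sum>b<d. a b * C b)"
proof -
  have "(\<Sum>c\<in>X. D c * R c) = (\<Sum>c\<in>X. \<Sum>b<d. (a b + cv c b - \<delta> b) * C b * R c)"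
    by (rule sum.cong[OF refl]) (simp add: D sum_distrib_right)
  also have "\<dots> = (\<Sum>b<d. \<Sum>c\<in>X. (a b + cv c b - \<delta> b) * C b * R c)"
    by (rule sum.swap)
  finally have 1: "N * (\<Sum>c\<in>X. D c * R c) = (\<Sum>b<d. N * (\<Sum>c\<in>X. (a b + cv c b - \<delta> b) * C b * R c))"
    by (simp add: sum_distrib_left)
  have 2: "N * (\<Sum>c\<in>X. (a b + cv c b - \<delta> b) * C b * R c) = (N - 1) * Rf * (a b * C b)"
    if b: "b < d" for b
  proof -
    have "(\<Sum>c\<in>X. (a b + cv c b - \<delta> b) * C b * R c)
        = C b * ((a b - \<delta> b) * (\<Sum>c\<in>X. R c) + (\<Sum>c\<in>X. cv c b * R c))"
      by (simp add: algebra_simps sum.distrib sum_distrib_left sum_subtractf)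
    then have h1: "(\<Sum>c\<in>X. (a b + cv c b - \<delta> b) * C b * R c)
        = C b * ((a b - \<delta> b) * Rf + (\<Sum>c\<in>X. cv c b * R c))"
      by (simp only: S1)
    have "N * (\<Sum>c\<in>X. (a b + cv c b - \<delta> b) * C b * R c)
        = N * (C b * ((a b - \<delta> b) * Rf + (\<Sum>c\<in>X. cv c b * R c)))"
      by (simp only: h1)
    also have "\<dots> = C b * ((a b - \<delta> b) * N * Rf + N * (\<Sum>c\<in>X. cv c b * R c))"
      by (simp add: algebra_simps)
    also have "\<dots> = C b * ((a b - \<delta> b) * N * Rf + e b * Rf)" using S2[OF b] by simp
    also have "\<dots> = (N - 1) * Rf * (a b * C b)" unfolding S3[OF b] by (simp add: algebra_simps)
    finally show ?thesis .
  qed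
  have "N * (\<Sum>c\<in>X. D c * R c) = (\<Sum>b<d. (N - 1) * Rf * (a b * C b))"
    unfolding 1 by (rule sum.cong[OF refl]) (rule 2, simp)
  also have "\<dots> = (N - 1) * Rf * (\<Sum>b<d. a b * C b)" by (rule sum_distrib_left[symmetric])
  finally show ?thesis .
qed



lemma base:
  assumes cons: "\<forall>j\<in>{1..d}. n j = (\<Sum>l\<in>{1..d}. E l j)"
  shows "finite (forests d [] n E) \<and>
    int (card (forests d [] n E)) * PP d n = det (Ahat d n E) * int (Gp d n E)"
proof -
  have sub: "forests d [] n E \<subseteq> {[]}" by (auto simp: forests_def)
  then have fin: "finite (forests d [] n E)" by (rule finite_subset) simp
  show ?thesis
  proof (cases "\<forall>j\<in>{1..d}. n j = 0")
    case True
    have E0: "E l j = 0" if "l \<in> {1..d}" "j \<in> {1..d}" for l j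
      using cons True that by simp
    have F1: "forests d [] n E = {[]}" using True E0 by (auto simp: forests_def)
    have P1: "pres d n = {}" using True by (auto simp: pres_def)
    have A1: "Ahat d n E = 1\<^sub>m d"
      by (rule eq_matI) (auto simp: Ahat_def ah_def True)
    have G1: "Gp d n E = 1" using True E0 by (simp add: Gp_def bb_def)
    show ?thesis using fin F1 P1 A1 G1 by (simp add: PP_def)
  next
    case False
    then obtain q where q: "q \<in> {1..d}" "n q \<noteq> 0" by auto
    have F0: "forests d [] n E = {}" using q by (auto simp: forests_def)
    have "det (Ahat d n E) * int (Gp d n E) = 0"
    proof (cases "\<exists>l\<in>{1..d}. \<exists>j\<in>{1..d}. n l = 0 \<and> E l j \<noteq> 0")
      case True
      then obtain l j where lj: "l \<in> {1..d}" "j \<in> {1..d}" "n l = 0" "E l j \<noteq> 0" by auto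
      have "Gp d n E = 0" unfolding Gp_def
        by (rule prod_zero, simp, rule bexI[OF _ lj(1)], rule prod_zero, simp, rule bexI[OF _ lj(2)])
          (simp add: lj bb_0)
      then show ?thesis by simp
    next
      case False
      define v where "v = vec d (\<lambda>a. if n (Suc a) \<noteq> 0 then 1 else 0 :: int)"
      have vc: "v \<in> carrier_vec d" by (simp add: v_def)
      have v0: "v \<noteq> 0\<^sub>v d"
      proof
        assume "v = 0\<^sub>v d"
        moreover have "q - 1 < d" using q by auto
        ultimately have "v $ (q - 1) = 0" by simp
        moreover have "v $ (q - 1) = 1" using \<open>q - 1 < d\<close> q by (simp add: v_def)
        ultimately show False by simp
      qed
      have key: "(\<Sum>a<d. ah n E (Suc a) j * (if n (Suc a) \<noteq> 0 then 1 else 0)) = 0"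
        if j: "j \<in> {1..d}" for j
      proof -
        have "(\<Sum>a<d. ah n E (Suc a) j * (if n (Suc a) \<noteq> 0 then 1 else 0))
            = (\<Sum>l\<in>{1..d}. ah n E l j * (if n l \<noteq> 0 then 1 else 0))"
          by (rule sum_Suc_conv)
        also have "\<dots> = (\<Sum>l\<in>{1..d}. (if l = j then int (n l) else 0) - int (E l j))"
        proof (rule sum.cong[OF refl])
          fix l assume l: "l \<in> {1..d}"
            have z: "n l = 0 \<Longrightarrow> E l j = 0" using False l j by blast
          show "ah n E l j * (if n l \<noteq> 0 then 1 else 0) = (if l = j then int (n l) else 0) - int (E l j)"
            using z by (auto simp: ah_def)
        qed
        also have "\<dots> = int (n j) - int (\<Sum>l\<in>{1..d}. E l j)"
          using j by (simp add: sum_subtractf)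
        also have "\<dots> = 0" using cons j by simp
        finally show ?thesis .
      qed
      have "transpose_mat (Ahat d n E) *\<^sub>v v = 0\<^sub>v d"
      proof (rule eq_vecI)
        fix b assume b: "b < dim_vec (0\<^sub>v d :: int vec)"
        then have b': "b < d" by simp
        have "(transpose_mat (Ahat d n E) *\<^sub>v v) $ b = (\<Sum>a<d. ah n E (Suc a) (Suc b) * (if n (Suc a) \<noteq> 0 then 1 else 0))"
          using b' by (simp add: Ahat_def v_def scalar_prod_def atLeast0LessThan)
        also have "\<dots> = 0" using key[of "Suc b"] b' by simp
        finally show "(transpose_mat (Ahat d n E) *\<^sub>v v) $ b = 0\<^sub>v d $ b" using b' by simp
      qed (simp add: Ahat_def)
      then have "det (transpose_mat (Ahat d n E)) = 0"
        using det_0_iff_vec_prod_zero[of "transpose_mat (Ahat d n E)" d] vc v0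
        by (auto simp: Ahat_def)
      then have "det (Ahat d n E) = 0" using det_transpose[OF Ahat_carrier[of d n E]] by simp
      then show ?thesis by simp
    qed
    then show ?thesis using fin F0 by simp
  qed
qed



lemma step:
  assumes i: "i \<in> {1..d}"
    and cons: "\<forall>j\<in>{1..d}. n j = cntl j (i#\<tau>) + (\<Sum>l\<in>{1..d}. E l j)"
    and IH: "\<forall>c\<in>box d E i. finite (forests d (sig d c @ \<tau>) (n(i := n i - 1)) (E(i := (\<lambda>j. E i j - c j))))
       \<and> int (card (forests d (sig d c @ \<tau>) (n(i := n i - 1)) (E(i := (\<lambda>j. E i j - c j))))) * PP d (n(i := n i - 1))
         = det (Ahat d (n(i := n i - 1)) (E(i := (\<lambda>j. E i j - c j)))) * int (Gp d (n(i := n i - 1)) (E(i := (\<lambda>j. E i j - c j))))"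
  shows "finite (forests d (i#\<tau>) n E) \<and> int (card (forests d (i#\<tau>) n E)) * PP d n = det (Ahat d n E) * int (Gp d n E)"
proof -
  define n' where "n' = n(i := n i - 1)"
  define E' where "E' = (\<lambda>c. E(i := (\<lambda>j. E i j - c j)))"
  define F where "F = (\<lambda>c. forests d (sig d c @ \<tau>) n' (E' c))"
  have ni: "n i \<ge> 1" using cons i by simp
  have IH': "\<And>c. c \<in> box d E i \<Longrightarrow> finite (F c) \<and> int (card (F c)) * PP d n' = det (Ahat d n' (E' c)) * int (Gp d n' (E' c))"
    using IH by (simp add: F_def n'_def E'_def)
  have rc: "finite (forests d (i#\<tau>) n E) \<and> card (forests d (i#\<tau>) n E) = (\<Sum>c\<in>box d E i. card (F c))"
    using rec_card[of i d n E \<tau>, OF i ni] IH' by (simp add: F_def n'_def E'_def)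
  define Q where "Q = (\<Prod>l\<in>pres d n - {i}. int (n l))"
  have finp: "finite (pres d n)" by (simp add: pres_def)
  have Qpos: "Q > 0" unfolding Q_def by (rule prod_pos) (auto simp: pres_def)
  have ipres: "i \<in> pres d n" using i ni by (simp add: pres_def)
  have PPn: "PP d n = int (n i) * Q" unfolding PP_def Q_def using ipres finp by (simp add: prod.remove)
  define Go where "Go = (\<Prod>l\<in>{1..d} - {i}. \<Prod>j\<in>{1..d}. bb (n l) (E l j))"
  define R where "R = (\<lambda>c. \<Prod>j\<in>{1..d}. bb (n i - 1) (E i j - c j))"
  define Rf where "Rf = (\<Prod>j\<in>{1..d}. bb (n i) (E i j))"
  have Gpn: "Gp d n E = Rf * Go" unfolding Gp_def Rf_def Go_def by (rule prod.remove) (use i in auto)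
  have Gpc: "Gp d n' (E' c) = R c * Go" for c
  proof -
    have "Gp d n' (E' c) = (\<Prod>j\<in>{1..d}. bb (n' i) (E' c i j)) * (\<Prod>l\<in>{1..d} - {i}. \<Prod>j\<in>{1..d}. bb (n' l) (E' c l j))"
      unfolding Gp_def by (rule prod.remove) (use i in auto)
    also have "(\<Prod>l\<in>{1..d} - {i}. \<Prod>j\<in>{1..d}. bb (n' l) (E' c l j)) = Go"
      unfolding Go_def by (rule prod.cong) (auto simp: n'_def E'_def)
    also have "(\<Prod>j\<in>{1..d}. bb (n' i) (E' c i j)) = R c" by (simp add: R_def n'_def E'_def)
    finally show ?thesis by simp
  qed
  define p where "p = i - 1"
  have p: "p < d" "Suc p = i" using i by (auto simp: p_def)
  define A where "A = Ahat d n E"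
  define A' where "A' = (\<lambda>c. Ahat d n' (E' c))"
  have Acar: "A \<in> carrier_mat d d" and A'car: "\<And>c. A' c \<in> carrier_mat d d"
    by (simp_all add: A_def A'_def Ahat_carrier)
  have agree: "A $$ (a, b) = A' c $$ (a, b)" if "a < d" "b < d" "a \<noteq> p" for a b c
  proof -
    have "Suc a \<noteq> i" using that p by auto
    then show ?thesis using that by (simp add: A_def A'_def Ahat_index ah_def n'_def E'_def)
  qed
  have detA': "det (A' c) = (\<Sum>b<d. A' c $$ (p, b) * cofactor A p b)" for c
    by (rule det_row_replace[OF Acar A'car p(1)]) (rule agree)
  have cbox_le: "c j \<le> E i j" if "c \<in> box d E i" "j \<in> {1..d}" for c j
    using that by (auto simp: box_def PiE_iff)
  show ?thesis
  proof (cases "n i = 1")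
    case True
    have presn': "pres d n' = pres d n - {i}" by (auto simp: pres_def n'_def True)
    have PPn': "PP d n' = Q" unfolding PP_def Q_def presn'
      by (rule prod.cong) (auto simp: n'_def)
    have PPn1: "PP d n = Q" using PPn True by simp
    define cs where "cs = restrict (E i) {1..d}"
    have csbox: "cs \<in> box d E i" by (simp add: cs_def box_def)
    have Rc: "R c = (if c = cs then 1 else 0)" if c: "c \<in> box d E i" for c
    proof (cases "c = cs")
      case True
      then show ?thesis by (simp add: R_def cs_def True bb_def)
    next
      case False
      have "\<exists>j\<in>{1..d}. c j \<noteq> E i j"
      proof (rule ccontr)
        assume "\<not> ?thesis"
        then have "c = cs" using c unfolding cs_def box_def by (intro PiE_ext) auto
        then show False using False by simp
      qed
      then obtain j where j: "j \<in> {1..d}" "c j \<noteq> E i j" by auto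
      have "c j < E i j" using cbox_le[OF c j(1)] j(2) by simp
      then have "bb (n i - 1) (E i j - c j) = 0" using True by (simp add: bb_0)
      then have "R c = 0" unfolding R_def using j(1) by (intro prod_zero) auto
      then show ?thesis using False by simp
    qed
    have zero: "card (F c) = 0" if c: "c \<in> box d E i" "c \<noteq> cs" for c
    proof -
      have fc: "finite (F c)" and eq: "int (card (F c)) * PP d n' = det (Ahat d n' (E' c)) * int (Gp d n' (E' c))"
        using IH'[OF c(1)] by auto
      have "Gp d n' (E' c) = 0" using Rc[OF c(1)] c(2) Gpc[of c] by simp
      then have "int (card (F c)) * Q = 0" using eq PPn' by simp
      then show ?thesis using Qpos fc by simp
    qed
    have cardF: "card (forests d (i#\<tau>) n E) = card (F cs)"
    proof -
      have "(\<Sum>c\<in>box d E i. card (F c)) = card (F cs) + (\<Sum>c\<in>box d E i - {cs}. card (F c))"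
        using csbox finite_box by (simp add: sum.remove)
      also have "(\<Sum>c\<in>box d E i - {cs}. card (F c)) = 0" using zero by simp
      finally show ?thesis using rc by simp
    qed
    have Rf1: "Rf = 1" by (simp add: Rf_def True bb_def)
    have El0: "E l i = 0" if "l \<in> {1..d}" for l
    proof -
      have "n i = 1 + cntl i \<tau> + (\<Sum>l\<in>{1..d}. E l i)" using cons i by simp
      then have "(\<Sum>l\<in>{1..d}. E l i) = 0" using True by simp
      then show ?thesis using that by simp
    qed
    have colA: "A $$ (a, p) = (if a = p then 1 else 0)" if a: "a < d" for a
    proof (cases "a = p")
      case True
      then show ?thesis using p a El0[OF i] \<open>n i = 1\<close> by (simp add: A_def Ahat_index ah_def)
    next
      case False
      have "Suc a \<in> {1..d}" using a by auto
      then show ?thesis using False p a El0[of "Suc a"] by (auto simp: A_def Ahat_index ah_def)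
    qed
    have "det A = (\<Sum>a<d. A $$ (a, p) * cofactor A a p)"
      by (rule laplace_expansion_column[OF Acar p(1)])
    also have "\<dots> = (\<Sum>a<d. (if a = p then cofactor A a p else 0))"
      by (rule sum.cong[OF refl]) (simp add: colA)
    also have "\<dots> = cofactor A p p" using p(1) by simp
    finally have detA: "det A = cofactor A p p" .
    have rowA': "A' cs $$ (p, b) = (if b = p then 1 else 0)" if b: "b < d" for b
      using p b True by (simp add: A'_def Ahat_index ah_def n'_def)
    have "det (A' cs) = (\<Sum>b<d. (if b = p then cofactor A p b else 0))"
      unfolding detA' by (rule sum.cong[OF refl]) (simp add: rowA')
    also have "\<dots> = cofactor A p p" using p(1) by simp
    finally have "det (A' cs) = cofactor A p p" .
    then have detEq: "det (A' cs) = det A" using detA by simp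
    have "int (card (forests d (i#\<tau>) n E)) * PP d n = int (card (F cs)) * PP d n'"
      using cardF PPn1 PPn' by simp
    also have "\<dots> = det (A' cs) * int (Gp d n' (E' cs))" using IH'[OF csbox] by (simp add: A'_def)
    also have "\<dots> = det A * int (Gp d n E)" using detEq Gpc[of cs] Rc[OF csbox] Gpn Rf1 by simp
    finally show ?thesis using rc by (simp add: A_def)
  next
    case False
    then have ni2: "n i \<ge> 2" using ni by simp
    have presn': "pres d n' = pres d n" using ni2 by (auto simp: pres_def n'_def)
    have PPn': "PP d n' = int (n i - 1) * Q"
    proof -
      have "PP d n' = int (n' i) * (\<Prod>l\<in>pres d n - {i}. int (n' l))"
        unfolding PP_def presn' using ipres finp by (simp add: prod.remove)
      also have "(\<Prod>l\<in>pres d n - {i}. int (n' l)) = Q"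
        unfolding Q_def by (rule prod.cong) (auto simp: n'_def)
      moreover have "n' i = n i - 1" by (simp add: n'_def)
      ultimately show ?thesis by simp
    qed
    define N where "N = int (n i)"
    define a where "a = (\<lambda>b. A $$ (p, b))"
    define C where "C = (\<lambda>b. cofactor A p b)"
    define \<delta> where "\<delta> = (\<lambda>b. if b = p then 1 else 0 :: int)"
    define e where "e = (\<lambda>b. int (E i (Suc b)))"
    define cv where "cv = (\<lambda>c b. int (c (Suc b)))"
    have rowA': "A' c $$ (p, b) = a b + cv c b - \<delta> b" if c: "c \<in> box d E i" and b: "b < d" for c b
    proof -
      have "Suc b \<in> {1..d}" using b by auto
      then have le: "c (Suc b) \<le> E i (Suc b)" using cbox_le[OF c] by simp
      show ?thesis using p b ni2 le
        by (auto simp: A'_def A_def a_def cv_def \<delta>_def Ahat_index ah_def n'_def E'_def of_nat_diff)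
    qed
    have S3: "a b = \<delta> b * N - e b" if b: "b < d" for b
      using p b ni2 by (auto simp: A_def a_def \<delta>_def N_def e_def Ahat_index ah_def)
    have S1: "(\<Sum>c\<in>box d E i. int (R c)) = int Rf"
    proof -
      have h: "(\<Sum>c\<in>box d E i. R c) = Rf" unfolding R_def Rf_def by (rule box_sum[OF ni])
      then have "int (\<Sum>c\<in>box d E i. R c) = int Rf" by simp
      then show ?thesis by (simp only: of_nat_sum)
    qed
    have S2: "N * (\<Sum>c\<in>box d E i. cv c b * int (R c)) = e b * int Rf" if b: "b < d" for b
    proof -
      have "Suc b \<in> {1..d}" using b by auto
      from box_wsum[where E=E and i=i, OF ni this]
      have "int (n i * (\<Sum>c\<in>box d E i. c (Suc b) * R c)) = int (E i (Suc b) * Rf)"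
        by (simp add: R_def Rf_def)
      then show ?thesis by (simp add: N_def cv_def e_def of_nat_sum)
    qed
    have D: "det (A' c) = (\<Sum>b<d. (a b + cv c b - \<delta> b) * C b)" if c: "c \<in> box d E i" for c
      unfolding detA' C_def by (rule sum.cong[OF refl]) (simp add: rowA'[OF c])
    have main: "N * (\<Sum>c\<in>box d E i. det (A' c) * int (R c)) = (N - 1) * int Rf * (\<Sum>b<d. a b * C b)"
      by (rule alg[OF D S1 S2 S3])
    have detA: "(\<Sum>b<d. a b * C b) = det A"
      unfolding a_def C_def by (rule laplace_expansion_row[OF Acar p(1), symmetric])
    have Nm1: "int (n i - 1) = N - 1" using ni by (simp add: N_def)
    have "(N - 1) * (int (card (forests d (i#\<tau>) n E)) * PP d n)
        = N * (\<Sum>c\<in>box d E i. int (card (F c)) * PP d n')"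
    proof -
      define S where "S = (\<Sum>c\<in>box d E i. int (card (F c)))"
      have cF: "int (card (forests d (i#\<tau>) n E)) = S" using rc by (simp add: S_def of_nat_sum)
      have PPn'': "PP d n' = (N - 1) * Q" using PPn' Nm1 by simp
      have PPnN: "PP d n = N * Q" using PPn by (simp add: N_def)
      have eqS: "(\<Sum>c\<in>box d E i. int (card (F c)) * PP d n') = S * PP d n'"
        unfolding S_def by (rule sum_distrib_right[symmetric])
      have "(N - 1) * (int (card (forests d (i#\<tau>) n E)) * PP d n) = (N - 1) * (S * (N * Q))"
        by (simp only: cF PPnN)
      also have "\<dots> = N * (S * ((N - 1) * Q))" by (simp add: algebra_simps)
      also have "\<dots> = N * (S * PP d n')" by (simp only: PPn'')
      also have "\<dots> = N * (\<Sum>c\<in>box d E i. int (card (F c)) * PP d n')" by (simp only: eqS)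
      finally show ?thesis .
    qed
    also have "\<dots> = N * (\<Sum>c\<in>box d E i. det (A' c) * int (R c) * int Go)"
      using IH' Gpc by (simp add: A'_def mult.assoc)
    also have "\<dots> = int Go * (N * (\<Sum>c\<in>box d E i. det (A' c) * int (R c)))"
      by (simp add: sum_distrib_left sum_distrib_right algebra_simps)
    also have "\<dots> = (N - 1) * (det A * int (Gp d n E))"
      unfolding main detA by (simp add: Gpn algebra_simps)
    finally have "(N - 1) * (int (card (forests d (i#\<tau>) n E)) * PP d n) = (N - 1) * (det A * int (Gp d n E))" .
    moreover have "N - 1 \<noteq> 0" using ni2 by (simp add: N_def)
    ultimately show ?thesis using rc by (simp add: A_def)
  qed
qed



lemma core:
  "(\<Sum>l\<in>{1..d}. n l) = s \<Longrightarrow> set \<tau> \<subseteq> {1..d} \<Longrightarrow> (\<forall>j\<in>{1..d}. n j = cntl j \<tau> + (\<Sum>l\<in>{1..d}. E l j))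
   \<Longrightarrow> finite (forests d \<tau> n E) \<and> int (card (forests d \<tau> n E)) * PP d n = det (Ahat d n E) * int (Gp d n E)"
proof (induction s arbitrary: \<tau> n E rule: less_induct)
  case (less s)
  show ?case
  proof (cases \<tau>)
    case Nil
    then show ?thesis using base less.prems(3) by simp
  next
    case (Cons i \<tau>')
    have i: "i \<in> {1..d}" and \<tau>': "set \<tau>' \<subseteq> {1..d}" using less.prems(2) Cons by auto
    have cons: "\<forall>j\<in>{1..d}. n j = cntl j (i#\<tau>') + (\<Sum>l\<in>{1..d}. E l j)" using less.prems(3) Cons by simp
    have ni: "n i \<ge> 1" using cons i by simp
    show ?thesis unfolding Cons
    proof (rule step[OF i cons], intro ballI)
      fix c assume c: "c \<in> box d E i"
      have cle: "\<forall>j\<in>{1..d}. c j \<le> E i j" using c by (auto simp: box_def PiE_iff)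
      have lt: "(\<Sum>l\<in>{1..d}. (n(i := n i - 1)) l) < s"
      proof -
        have "(\<Sum>l\<in>{1..d}. (n(i := n i - 1)) l) = (n(i := n i - 1)) i + (\<Sum>l\<in>{1..d}-{i}. (n(i := n i - 1)) l)"
          by (rule sum.remove) (use i in auto)
        also have "(\<Sum>l\<in>{1..d}-{i}. (n(i := n i - 1)) l) = (\<Sum>l\<in>{1..d}-{i}. n l)"
          by (rule sum.cong) auto
        finally have a: "(\<Sum>l\<in>{1..d}. (n(i := n i - 1)) l) = (n i - 1) + (\<Sum>l\<in>{1..d}-{i}. n l)" by simp
        have b: "s = n i + (\<Sum>l\<in>{1..d}-{i}. n l)"
          unfolding less.prems(1)[symmetric] by (rule sum.remove) (use i in auto)
        show ?thesis using a b ni by simp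
      qed
      have cons': "\<forall>j\<in>{1..d}. (n(i := n i - 1)) j = cntl j (sig d c @ \<tau>') + (\<Sum>l\<in>{1..d}. (E(i := (\<lambda>j. E i j - c j))) l j)"
      proof
        fix j assume j: "j \<in> {1..d}"
        have "(\<Sum>l\<in>{1..d}. (E(i := (\<lambda>j. E i j - c j))) l j) = (E(i := (\<lambda>j. E i j - c j))) i j + (\<Sum>l\<in>{1..d}-{i}. (E(i := (\<lambda>j. E i j - c j))) l j)"
          by (rule sum.remove) (use i in auto)
        also have "(\<Sum>l\<in>{1..d}-{i}. (E(i := (\<lambda>j. E i j - c j))) l j) = (\<Sum>l\<in>{1..d}-{i}. E l j)"
          by (rule sum.cong) auto
        finally have s1: "(\<Sum>l\<in>{1..d}. (E(i := (\<lambda>j. E i j - c j))) l j) = (E i j - c j) + (\<Sum>l\<in>{1..d}-{i}. E l j)"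
          by simp
        have s2: "(\<Sum>l\<in>{1..d}. E l j) = E i j + (\<Sum>l\<in>{1..d}-{i}. E l j)"
          by (rule sum.remove) (use i in auto)
        have s3: "cntl j (sig d c @ \<tau>') = c j + cntl j \<tau>'" using j by (simp add: cntl_sig)
        have s4: "n j = (if i = j then 1 else 0) + cntl j \<tau>' + (\<Sum>l\<in>{1..d}. E l j)" using cons j by simp
        have s5: "c j \<le> E i j" using cle j by simp
        show "(n(i := n i - 1)) j = cntl j (sig d c @ \<tau>') + (\<Sum>l\<in>{1..d}. (E(i := (\<lambda>j. E i j - c j))) l j)"
          using s1 s2 s3 s4 s5 by auto
      qed
      have st: "set (sig d c @ \<tau>') \<subseteq> {1..d}" using set_sig[of d c] \<tau>' by auto
      show "finite (forests d (sig d c @ \<tau>') (n(i := n i - 1)) (E(i := (\<lambda>j. E i j - c j))))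
       \<and> int (card (forests d (sig d c @ \<tau>') (n(i := n i - 1)) (E(i := (\<lambda>j. E i j - c j))))) * PP d (n(i := n i - 1))
         = det (Ahat d (n(i := n i - 1)) (E(i := (\<lambda>j. E i j - c j)))) * int (Gp d (n(i := n i - 1)) (E(i := (\<lambda>j. E i j - c j))))"
        by (rule less.IH[OF lt refl st cons'])
    qed
  qed
qed



lemma froots_cntl: "froots i F = cntl i (map ptype F)"
  by (simp add: froots_def cntl_def filter_map comp_def)

theorem theorem5p1:
  fixes d :: nat and r n :: "nat \<Rightarrow> int" and k :: "nat \<Rightarrow> nat \<Rightarrow> int"
  assumes "d \<ge> 2"
    and "\<forall>i\<in>{1..d}. r i \<ge> 0"
    and "(\<Sum>i=1..d. r i) \<ge> 1"
    and "\<forall>i\<in>{1..d}. \<forall>j\<in>{1..d}. i \<noteq> j \<longrightarrow> k i j \<ge> 0"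
    and "\<forall>j\<in>{1..d}. - k j j = r j + (\<Sum>i\<in>{1..d} - {j}. k i j)"
    and "\<forall>i\<in>{1..d}. n i \<ge> - k i i"
    and "\<forall>i\<in>{1..d}. - k i i > 0"
  shows "real (card (forest_class d n r k)) =
    real_of_int (det (mat d d (\<lambda>(i, j). - k (i + 1) (j + 1))))
      / (\<Prod>i=1..d. real_of_int (n i))
      * (\<Prod>i=1..d. \<Prod>j=1..d.
           (let kk = (if i = j then n i + k i i else k i j)
            in real (nat (n i + kk - 1) choose nat kk)))"
proof -
  note rpos = assms(2) and kpos = assms(4) and kdiag = assms(5) and nge = assms(6) and kneg = assms(7)
  define nn where "nn = (\<lambda>i. nat (n i))"
  define rr where "rr = (\<lambda>i. nat (r i))"
  define E where "E = (\<lambda>i j. nat (if i = j then n i + k i i else k i j))"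
  define \<tau> where "\<tau> = sig d rr"
  have kd: "- k j j = r j + (\<Sum>i\<in>{1..d} - {j}. k i j)" if "j \<in> {1..d}" for j
    using kdiag that by blast
  have npos: "n i > 0" if "i \<in> {1..d}" for i using nge kneg that by fastforce
  have Ediag: "int (E j j) = n j + k j j" if "j \<in> {1..d}" for j
  proof -
    have "- k j j \<le> n j" using nge that by blast
    then show ?thesis by (simp add: E_def)
  qed
  have Eoff: "int (E i j) = k i j" if "i \<in> {1..d}" "j \<in> {1..d}" "i \<noteq> j" for i j
    using kpos that by (simp add: E_def)
  have sumE: "(\<Sum>l\<in>{1..d}. int (E l j)) = int (E j j) + (\<Sum>l\<in>{1..d} - {j}. k l j)" if j: "j \<in> {1..d}" for j
  proof -
    have "(\<Sum>l\<in>{1..d}. int (E l j)) = int (E j j) + (\<Sum>l\<in>{1..d} - {j}. int (E l j))"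
      by (rule sum.remove) (use j in auto)
    also have "(\<Sum>l\<in>{1..d} - {j}. int (E l j)) = (\<Sum>l\<in>{1..d} - {j}. k l j)"
      by (rule sum.cong) (use j Eoff in auto)
    finally show ?thesis .
  qed
  have cons: "\<forall>j\<in>{1..d}. nn j = cntl j \<tau> + (\<Sum>l\<in>{1..d}. E l j)"
  proof
    fix j assume j: "j \<in> {1..d}"
    have "int (cntl j \<tau> + (\<Sum>l\<in>{1..d}. E l j)) = r j + (\<Sum>l\<in>{1..d}. int (E l j))"
      using j rpos by (simp add: \<tau>_def cntl_sig rr_def of_nat_sum)
    also have "\<dots> = n j" using sumE[OF j] Ediag[OF j] kd[OF j] by simp
    finally have h: "int (cntl j \<tau> + (\<Sum>l\<in>{1..d}. E l j)) = n j" .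
    show "nn j = cntl j \<tau> + (\<Sum>l\<in>{1..d}. E l j)" unfolding nn_def h[symmetric] by (rule nat_int)
  qed
  have key: "forest_class d n r k = forests d \<tau> nn E"
  proof (rule Set.set_eqI, rule iffI)
    fix F assume F: "F \<in> forest_class d n r k"
    then have pf: "plane_forest d F" and fv: "\<forall>i\<in>{1..d}. int (fverts i F) = n i"
      and fr: "\<forall>i\<in>{1..d}. int (froots i F) = r i"
      and fe: "\<forall>i\<in>{1..d}. \<forall>j\<in>{1..d}. i \<noteq> j \<longrightarrow> int (fedges i j F) = k i j"
      by (auto simp: forest_class_def)
    have wf: "\<forall>T\<in>set F. wf_tree d T" and so: "sorted (map ptype F)" using pf by (auto simp: plane_forest_def)
    have mp: "map ptype F = \<tau>" unfolding \<tau>_def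
    proof (rule sorted_eq_sig[OF so])
      show "set (map ptype F) \<subseteq> {1..d}" using wf wf_ptype by auto
      show "\<forall>j\<in>{1..d}. cntl j (map ptype F) = rr j" using fr by (auto simp: rr_def froots_cntl)
    qed
    have fed: "fedges i j F = E i j" if i: "i \<in> {1..d}" and j: "j \<in> {1..d}" for i j
    proof (cases "i = j")
      case False
      have "int (fedges i j F) = k i j" using fe i j False by blast
      then have "int (fedges i j F) = int (E i j)" using Eoff[OF i j False] by simp
      then show ?thesis by simp
    next
      case True
      have c1: "fverts j F = cntl j (map ptype F) + (\<Sum>l\<in>{1..d}. fedges l j F)"
        by (rule forest_count[OF wf])
      have "(\<Sum>l\<in>{1..d}. int (fedges l j F)) = int (fedges j j F) + (\<Sum>l\<in>{1..d} - {j}. int (fedges l j F))"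
        by (rule sum.remove) (use j in auto)
      also have "(\<Sum>l\<in>{1..d} - {j}. int (fedges l j F)) = (\<Sum>l\<in>{1..d} - {j}. k l j)"
        by (rule sum.cong) (use j fe in auto)
      finally have c2: "(\<Sum>l\<in>{1..d}. int (fedges l j F)) = int (fedges j j F) + (\<Sum>l\<in>{1..d} - {j}. k l j)" .
      have "int (fverts j F) = int (froots j F) + (\<Sum>l\<in>{1..d}. int (fedges l j F))"
        using c1 by (simp add: froots_cntl of_nat_sum)
      moreover have "int (fverts j F) = n j" "int (froots j F) = r j" using fv fr j by auto
      ultimately have "int (fedges j j F) = n j + k j j" using c2 kd[OF j] by simp
      then show ?thesis using True Ediag[OF j] by simp
    qed
    show "F \<in> forests d \<tau> nn E" unfolding forests_def
      using mp wf fv fed npos by (auto simp: nn_def)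
  next
    fix F assume F: "F \<in> forests d \<tau> nn E"
    then have mp: "map ptype F = \<tau>" and wf: "\<forall>T\<in>set F. wf_tree d T"
      and fv: "\<forall>i\<in>{1..d}. fverts i F = nn i" and fe: "\<forall>i\<in>{1..d}. \<forall>j\<in>{1..d}. fedges i j F = E i j"
      by (auto simp: forests_def)
    have pf: "plane_forest d F" using mp wf sorted_sig[of d rr] by (simp add: plane_forest_def \<tau>_def)
    have "int (froots i F) = r i" if "i \<in> {1..d}" for i
      using that mp rpos by (simp add: froots_cntl \<tau>_def cntl_sig rr_def)
    moreover have "int (fverts i F) = n i" if "i \<in> {1..d}" for i
      using that fv npos[OF that] by (simp add: nn_def)
    moreover have "int (fedges i j F) = k i j" if "i \<in> {1..d}" "j \<in> {1..d}" "i \<noteq> j" for i j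
      using that fe Eoff by simp
    ultimately show "F \<in> forest_class d n r k" using pf by (simp add: forest_class_def)
  qed
  have st: "set \<tau> \<subseteq> {1..d}" using set_sig by (simp add: \<tau>_def)
  have C: "int (card (forests d \<tau> nn E)) * PP d nn = det (Ahat d nn E) * int (Gp d nn E)"
    using core[OF refl st cons] by simp
  have presall: "pres d nn = {1..d}"
  proof (rule Set.set_eqI)
    fix x show "x \<in> pres d nn \<longleftrightarrow> x \<in> {1..d}" using npos[of x] by (auto simp: pres_def nn_def)
  qed
  have PPeq: "PP d nn = (\<Prod>i=1..d. n i)"
    unfolding PP_def presall
  proof (rule prod.cong[OF refl])
    fix x assume x: "x \<in> {1..d}" show "int (nn x) = n x" using npos[OF x] by (simp add: nn_def)
  qed
  have Aeq: "Ahat d nn E = mat d d (\<lambda>(i, j). - k (i + 1) (j + 1))"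
  proof (rule eq_matI)
    fix a b assume a: "a < dim_row (mat d d (\<lambda>(i, j). - k (i + 1) (j + 1)))"
      and b: "b < dim_col (mat d d (\<lambda>(i, j). - k (i + 1) (j + 1)))"
    then have a': "Suc a \<in> {1..d}" and b': "Suc b \<in> {1..d}" by auto
    have "ah nn E (Suc a) (Suc b) = - k (Suc a) (Suc b)"
    proof (cases "a = b")
      case True
      then show ?thesis using npos[OF a'] Ediag[OF a'] by (simp add: ah_def nn_def)
    next
      case False
      then show ?thesis using npos[OF a'] Eoff[OF a' b'] by (simp add: ah_def nn_def)
    qed
    then show "Ahat d nn E $$ (a, b) = mat d d (\<lambda>(i, j). - k (i + 1) (j + 1)) $$ (a, b)"
      using a b by (simp add: Ahat_def)
  qed (simp_all add: Ahat_def)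
  have Geq: "real (Gp d nn E) = (\<Prod>i=1..d. \<Prod>j=1..d.
           (let kk = (if i = j then n i + k i i else k i j)
            in real (nat (n i + kk - 1) choose nat kk)))"
    unfolding Gp_def of_nat_prod
  proof (rule prod.cong[OF refl], rule prod.cong[OF refl])
    fix i j assume i: "i \<in> {1..d}" and j: "j \<in> {1..d}"
    define kk where "kk = (if i = j then n i + k i i else k i j)"
    have h1: "- k i i \<le> n i" using nge i by blast
    have h2: "i \<noteq> j \<Longrightarrow> 0 \<le> k i j" using kpos i j by blast
    have kk0: "kk \<ge> 0" using h1 h2 by (auto simp: kk_def)
    have Ek: "E i j = nat kk" by (simp add: E_def kk_def)
    have "nat (n i) + nat kk - 1 = nat (n i + kk - 1)" using npos[OF i] kk0 by simp
    then show "real (bb (nn i) (E i j)) = (let kk = (if i = j then n i + k i i else k i j)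
            in real (nat (n i + kk - 1) choose nat kk))"
      by (simp add: bb_def nn_def Ek kk_def[symmetric] Let_def)
  qed
  have Pne: "(\<Prod>i=1..d. real_of_int (n i)) \<noteq> 0"
  proof
    assume "(\<Prod>i=1..d. real_of_int (n i)) = 0"
    then obtain a where a: "a \<in> {1..d}" "real_of_int (n a) = 0" by (auto simp: prod_zero_iff)
    then show False using npos[OF a(1)] by simp
  qed
  have "real (card (forest_class d n r k)) * (\<Prod>i=1..d. real_of_int (n i))
      = real_of_int (det (mat d d (\<lambda>(i, j). - k (i + 1) (j + 1)))) * real (Gp d nn E)"
  proof -
    have "real_of_int (int (card (forests d \<tau> nn E)) * PP d nn) = real_of_int (det (Ahat d nn E) * int (Gp d nn E))"
      using C by simp
    then show ?thesis unfolding key PPeq Aeq by (simp add: of_int_prod)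
  qed
  then show ?thesis unfolding Geq[symmetric] using Pne by (simp add: field_simps)
qed


end
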